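(* Work on the event that, for every level $m\in\{1,\dots,\overline m_T\}$ introduced by the GSR algorithm, the batch generated when level $m$ was introduced contains a task $i_m$ with $U^\star-U^{(i_m)}\le\epsilon^U_m$. Define $U^{\max}_t:=\max_{i\in\mathcal I_t}U^{(i)}$ and let $m_t$ be the algorithm's level at round $t$. Then for every $t$, $$U^\star-U^{\max}_t\le\epsilon^U_{\min\{m_t,m^\star\}}.$$ In particular $U^\star-U^{\max}_t\le\epsilon^U_{m_t}$ before level $m^\star$ is reached, and $U^\star-U^{\max}_t\le\epsilon^U_{m^\star}$ at all rounds after level $m^\star$ is introduced.
   Context: Tasks have long-run values $U^{(i)}\in[0,1]$, $U^\star:=\sup_iU^{(i)}$; $\epsilon^U_m:=\epsilon^U_02^{-m}$ with $\epsilon^U_0=1$. The GSR algorithm maintains a set $\mathcal I_t$ of instantiated tasks (tasks are only added, never removed) and a nondecreasing level counter $m_t\in\{0,\dots,\overline m_T\}$ starting at $0$; each time the level increases to $m$ a batch of new tasks is added to the set. $m^\star\in\{0,\dots,\overline m_T\}$ is a fixed target level. *)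

theory Defs
  imports Complex_Main
begin

text \<open>Accuracy schedule: epsilon^U_m = epsilon^U_0 * 2^(-m) with epsilon^U_0 = 1.\<close>
definition epsU :: "nat \<Rightarrow> real" where
  "epsU m = 1 / 2 ^ m"

definition Ustar :: "('a \<Rightarrow> real) \<Rightarrow> real" where
  "Ustar U = (SUP i. U i)"

definition Umax :: "('a \<Rightarrow> real) \<Rightarrow> 'a set \<Rightarrow> real" where
  "Umax U S = Max (U ` S)"

end

theory Submission
  imports Defs
begin

theorem lemmaC20:
  fixes U :: "'a \<Rightarrow> real"
    and I :: "nat \<Rightarrow> 'a set"
    and m :: "nat \<Rightarrow> nat"
    and B :: "nat \<Rightarrow> 'a set"
    and mbar mstar :: nat
  assumes U_range: "\<And>i. 0 \<le> U i \<and> U i \<le> 1"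
    and I_fin: "\<And>t. finite (I t)"
    and I_ne: "\<And>t. I t \<noteq> {}"
    and I_mono: "\<And>t. I t \<subseteq> I (Suc t)"
    and m_0: "m 0 = 0"
    and m_mono: "\<And>t. m t \<le> m (Suc t)"
    and m_bound: "\<And>t. m t \<le> mbar"
    and batch_added: "\<And>t. m (Suc t) \<noteq> m t \<Longrightarrow> B (m (Suc t)) \<subseteq> I (Suc t)"
    and mstar_le: "mstar \<le> mbar"
    and good_event: "\<And>k. 1 \<le> k \<Longrightarrow> k \<le> mbar \<Longrightarrow> \<exists>i\<in>B k. Ustar U - U i \<le> epsU k"
  shows "\<forall>t. Ustar U - Umax U (I t) \<le> epsU (min (m t) mstar)
           \<and> (m t < mstar \<longrightarrow> Ustar U - Umax U (I t) \<le> epsU (m t))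
           \<and> (mstar \<le> m t \<longrightarrow> Ustar U - Umax U (I t) \<le> epsU mstar)"
proof -
  have Us1: "Ustar U \<le> 1" unfolding Ustar_def by (rule cSUP_least) (auto simp: U_range)
  have Umax_ge: "U i \<le> Umax U (I t)" if "i \<in> I t" for i t
    unfolding Umax_def using I_fin that by (auto intro: Max_ge)
  have Umax_nn: "0 \<le> Umax U (I t)" for t
  proof -
    obtain i where "i \<in> I t" using I_ne by blast
    then show ?thesis using Umax_ge[of i t] U_range[of i] by linarith
  qed
  have Umax_mono: "Umax U (I t) \<le> Umax U (I (Suc t))" for t
  proof -
    have "Umax U (I t) \<in> U ` I t" unfolding Umax_def using I_fin I_ne by (intro Max_in) auto
    then obtain i where "i \<in> I t" "Umax U (I t) = U i" by auto
    then show ?thesis using Umax_ge[of i "Suc t"] I_mono by auto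
  qed
  have epsU_anti: "epsU b \<le> epsU a" if "a \<le> b" for a b
    unfolding epsU_def using that by (simp add: power_increasing divide_left_mono)
  have main: "Ustar U - Umax U (I t) \<le> epsU (m t)" for t
  proof (induction t)
    case 0
    then show ?case using Us1 Umax_nn[of 0] m_0 by (simp add: epsU_def)
  next
    case (Suc t)
    show ?case
    proof (cases "m (Suc t) = m t")
      case True
      then show ?thesis using Suc Umax_mono[of t] by simp
    next
      case False
      then have k1: "1 \<le> m (Suc t)" using m_mono[of t] by simp
      obtain i where "i \<in> B (m (Suc t))" "Ustar U - U i \<le> epsU (m (Suc t))"
        using good_event[OF k1 m_bound] by blast
      moreover have "i \<in> I (Suc t)" using batch_added[OF False] calculation(1) by blast
      ultimately show ?thesis using Umax_ge[of i "Suc t"] by linarith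
    qed
  qed
  show ?thesis
  proof (intro allI conjI impI)
    fix t
    show "Ustar U - Umax U (I t) \<le> epsU (min (m t) mstar)"
      using main[of t] epsU_anti[of "min (m t) mstar" "m t"] by simp
    show "m t < mstar \<Longrightarrow> Ustar U - Umax U (I t) \<le> epsU (m t)" using main[of t] .
    show "mstar \<le> m t \<Longrightarrow> Ustar U - Umax U (I t) \<le> epsU mstar"
      using main[of t] epsU_anti[of mstar "m t"] by simp
  qed
qed

end
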